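(* If $(X,d_X)$ is a separable metric space, then $\Delta_X^{(c)}(R)\leq 2R$ for all $R\in[0,\infty)$. Consequently, for every $\varepsilon>0$, every separable metric space $(4+\varepsilon)$-Lipschitz embeds into $c_0^+$.
   Context: For a cover $\mathcal{U}$ of $X$: $\mathrm{diam}(\mathcal{U})=\sup_{U\in\mathcal{U}}\mathrm{diam}(U)$; $\mathcal{L}(\mathcal{U})=\sup\{d\in[0,\infty): \text{every } E\subseteq X \text{ with } \mathrm{diam}(E)<d \text{ is contained in some } U\in\mathcal{U}\}$; point-finite means each point lies in only finitely many members. $\Delta_X^{(c)}(R)=\inf\{\mathrm{diam}(\mathcal{U}): \mathcal{U} \text{ point-finite cover of } X,\ \mathcal{L}(\mathcal{U})\geq R\}$. $c_0^+=\{(x_i)_{i\in\mathbb{N}}\in c_0: x_i\geq0\ \forall i\}$ with the sup-norm metric. A map $f$ is a $K$-Lipschitz embedding if it is injective and $\mathrm{Lip}(f)\cdot\mathrm{Lip}(f^{-1})\leq K$. *)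

theory Defs
  imports "HOL-Analysis.Analysis"
begin

(* diameter of a subset of a metric-space type, valued in [0,\<infinity>]; diam {} = 0 *)
definition ediam :: "'a::metric_space set \<Rightarrow> ennreal" where
  "ediam E = (SUP x\<in>E. SUP y\<in>E. ennreal (dist x y))"

definition cover_diam :: "'a::metric_space set set \<Rightarrow> ennreal" where
  "cover_diam \<U> = (SUP U\<in>\<U>. ediam U)"

definition lebesgue_num :: "'a::metric_space set \<Rightarrow> 'a set set \<Rightarrow> ennreal" where
  "lebesgue_num X \<U> = Sup {d. d \<noteq> \<infinity> \<and>
      (\<forall>E. E \<subseteq> X \<and> ediam E < d \<longrightarrow> (\<exists>U\<in>\<U>. E \<subseteq> U))}"

definition is_cover :: "'a set \<Rightarrow> 'a set set \<Rightarrow> bool" where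
  "is_cover X \<U> \<longleftrightarrow> (\<forall>U\<in>\<U>. U \<subseteq> X) \<and> \<Union>\<U> = X"

definition point_finite :: "'a set \<Rightarrow> 'a set set \<Rightarrow> bool" where
  "point_finite X \<U> \<longleftrightarrow> (\<forall>x\<in>X. finite {U\<in>\<U>. x \<in> U})"

(* \<Delta>_X^(c)(R); Inf of the empty set is \<infinity> *)
definition Delta_c :: "'a::metric_space set \<Rightarrow> real \<Rightarrow> ennreal" where
  "Delta_c X R = Inf {cover_diam \<U> | \<U>. is_cover X \<U> \<and> point_finite X \<U>
                       \<and> lebesgue_num X \<U> \<ge> ennreal R}"

definition c0plus :: "(nat \<Rightarrow> real) set" where
  "c0plus = {x. (\<forall>i. x i \<ge> 0) \<and> x \<longlonglongrightarrow> 0}"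

definition c0_dist :: "(nat \<Rightarrow> real) \<Rightarrow> (nat \<Rightarrow> real) \<Rightarrow> real" where
  "c0_dist x y = (SUP i. \<bar>x i - y i\<bar>)"

(* Lipschitz constant of f on S (w.r.t. distances d on the domain, d' on the codomain),
   valued in [0,\<infinity>]; equal to 0 if S has at most one point *)
definition lip_const :: "'a set \<Rightarrow> ('a \<Rightarrow> 'a \<Rightarrow> real) \<Rightarrow> ('b \<Rightarrow> 'b \<Rightarrow> real) \<Rightarrow> ('a \<Rightarrow> 'b) \<Rightarrow> ennreal" where
  "lip_const S d d' f = (SUP p\<in>{(x,y). x \<in> S \<and> y \<in> S \<and> x \<noteq> y}.
       ennreal (d' (f (fst p)) (f (snd p)) / d (fst p) (snd p)))"

definition lip_embeds_c0plus :: "'a::metric_space set \<Rightarrow> real \<Rightarrow> ('a \<Rightarrow> nat \<Rightarrow> real) \<Rightarrow> bool" where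
  "lip_embeds_c0plus X K f \<longleftrightarrow> f ` X \<subseteq> c0plus \<and> inj_on f X \<and>
     lip_const X dist c0_dist f * lip_const (f ` X) c0_dist dist (inv_into X f) \<le> ennreal K"

end

theory Submission
  imports Defs
begin

definition UU :: "'a::metric_space set \<Rightarrow> (nat \<Rightarrow> 'a) \<Rightarrow> real \<Rightarrow> real \<Rightarrow> nat \<Rightarrow> 'a set" where
  "UU X xs R \<delta> n = {w\<in>X. dist w (xs n) < R + \<delta> \<and> (\<forall>m<n. \<delta> \<le> dist w (xs m))}"

lemma UU_pf:
  assumes dens: "\<forall>z\<in>X. \<forall>e>0. \<exists>n. dist z (xs n) < e" and d: "\<delta> > 0" and z: "z \<in> X"
  shows "finite {n. z \<in> UU X xs R \<delta> n}"
proof -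
  obtain n0 where n0: "dist z (xs n0) < \<delta>" using dens z d by blast
  have "{n. z \<in> UU X xs R \<delta> n} \<subseteq> {..n0}"
  proof
    fix n assume "n \<in> {n. z \<in> UU X xs R \<delta> n}"
    then have "\<forall>m<n. \<delta> \<le> dist z (xs m)" by (simp add: UU_def)
    with n0 show "n \<in> {..n0}" by (metis atMost_iff not_le leD)
  qed
  then show ?thesis using finite_subset by blast
qed

lemma UU_key:
  assumes dens: "\<forall>z\<in>X. \<forall>e>0. \<exists>n. dist z (xs n) < e" and d: "\<delta> > 0"
    and E: "E \<subseteq> X" "E \<noteq> {}" and pw: "\<forall>e\<in>E. \<forall>f\<in>E. dist e f \<le> R"
  shows "\<exists>n. E \<subseteq> UU X xs R \<delta> n"
proof -
  define P where "P = (\<lambda>n. \<exists>e\<in>E. dist e (xs n) < \<delta>)"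
  obtain e where "e \<in> E" using E by blast
  then obtain n1 where "dist e (xs n1) < \<delta>" using dens d E by blast
  then have "P n1" using \<open>e \<in> E\<close> P_def by blast
  define n where "n = (LEAST n. P n)"
  have Pn: "P n" unfolding n_def by (rule LeastI, fact)
  have nP: "\<And>m. m < n \<Longrightarrow> \<not> P m" unfolding n_def by (rule not_less_Least)
  obtain e0 where e0: "e0 \<in> E" "dist e0 (xs n) < \<delta>" using Pn P_def by blast
  have "E \<subseteq> UU X xs R \<delta> n"
  proof
    fix f assume f: "f \<in> E"
    have "dist f (xs n) \<le> dist f e0 + dist e0 (xs n)" by (rule dist_triangle)
    also have "\<dots> < R + \<delta>" using pw f e0 by (simp add: add_le_less_mono)
    finally have 1: "dist f (xs n) < R + \<delta>" .
    have 2: "\<forall>m<n. \<delta> \<le> dist f (xs m)" using nP f P_def by (auto simp: not_less)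
    show "f \<in> UU X xs R \<delta> n" using 1 2 f E by (auto simp: UU_def)
  qed
  then show ?thesis by blast
qed

lemma UU_diam:
  assumes "v \<in> UU X xs R \<delta> n" "w \<in> UU X xs R \<delta> n"
  shows "dist v w < 2 * (R + \<delta>)"
proof -
  have "dist v w \<le> dist v (xs n) + dist w (xs n)" by (rule dist_triangle2)
  also have "\<dots> < 2 * (R + \<delta>)" using assms by (simp add: UU_def)
  finally show ?thesis .
qed

lemma ediam_ge: "e \<in> E \<Longrightarrow> f \<in> E \<Longrightarrow> ennreal (dist e f) \<le> ediam E"
  unfolding ediam_def by (meson SUP_upper2 order_refl)

lemma ediam_le: "(\<And>e f. e \<in> E \<Longrightarrow> f \<in> E \<Longrightarrow> dist e f \<le> c) \<Longrightarrow> ediam E \<le> ennreal c"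
  unfolding ediam_def by (intro SUP_least ennreal_leI) auto

lemma dense_seq:
  fixes X :: "'a::metric_space set"
  assumes "separable_space (subtopology euclidean X)"
  shows "\<exists>xs::nat\<Rightarrow>'a. \<forall>z\<in>X. \<forall>e>0. \<exists>n. dist z (xs n) < (e::real)"
proof (cases "X = {}")
  case True then show ?thesis by auto
next
  case False
  obtain C where C: "countable C" "C \<subseteq> X" "subtopology euclidean X closure_of C = X"
    using assms unfolding separable_space_def by auto
  have cl: "X \<subseteq> closure C"
    using C(3) by (metis closure_of_subtopology euclidean_closure_of inf.absorb_iff2 C(2) le_inf_iff order_refl)
  have "C \<noteq> {}" using cl False by auto
  have "\<forall>z\<in>X. \<forall>e>0. \<exists>n. dist z (from_nat_into C n) < e"
  proof (intro ballI allI impI)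
    fix z e assume "z \<in> X" "(e::real) > 0"
    then obtain c where "c \<in> C" "dist c z < e" using cl closure_approachable by blast
    then show "\<exists>n. dist z (from_nat_into C n) < e"
      by (metis C(1) dist_commute from_nat_into_to_nat_on)
  qed
  then show ?thesis by blast
qed

lemma part1:
  fixes xs :: "nat \<Rightarrow> 'a::metric_space"
  assumes dens: "\<forall>z\<in>X. \<forall>e>0. \<exists>n. dist z (xs n) < e" and R: "R \<ge> 0"
  shows "Delta_c X R \<le> ennreal (2 * R)"
proof (rule ennreal_le_epsilon)
  fix \<epsilon> :: real assume "\<epsilon> > 0"
  define \<delta> where "\<delta> = \<epsilon> / 2"
  have d: "\<delta> > 0" using \<open>\<epsilon> > 0\<close> \<delta>_def by simp
  define \<U> where "\<U> = insert {} (range (UU X xs R \<delta>))"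
  have cov: "is_cover X \<U>"
    unfolding is_cover_def
  proof
    show "\<forall>U\<in>\<U>. U \<subseteq> X" by (auto simp: \<U>_def UU_def)
    show "\<Union>\<U> = X"
    proof
      show "\<Union>\<U> \<subseteq> X" by (auto simp: \<U>_def UU_def)
      show "X \<subseteq> \<Union>\<U>"
      proof
        fix z assume "z \<in> X"
        then obtain n where "{z} \<subseteq> UU X xs R \<delta> n"
          using UU_key[OF dens d, of "{z}" R] R by auto
        then show "z \<in> \<Union>\<U>" by (auto simp: \<U>_def)
      qed
    qed
  qed
  have pf: "point_finite X \<U>"
    unfolding point_finite_def
  proof
    fix z assume "z \<in> X"
    have "{U\<in>\<U>. z \<in> U} \<subseteq> UU X xs R \<delta> ` {n. z \<in> UU X xs R \<delta> n}"
      by (auto simp: \<U>_def)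
    then show "finite {U\<in>\<U>. z \<in> U}"
      using UU_pf[OF dens d \<open>z \<in> X\<close>] finite_subset by blast
  qed
  have leb: "lebesgue_num X \<U> \<ge> ennreal R"
    unfolding lebesgue_num_def
  proof (rule Sup_upper, safe)
    show "ennreal R = \<infinity> \<Longrightarrow> False" by simp
    fix E assume E: "E \<subseteq> X" "ediam E < ennreal R"
    show "\<exists>U\<in>\<U>. E \<subseteq> U"
    proof (cases "E = {}")
      case True then show ?thesis by (auto simp: \<U>_def)
    next
      case False
      have "\<forall>e\<in>E. \<forall>f\<in>E. dist e f \<le> R"
      proof (intro ballI)
        fix e f assume "e \<in> E" "f \<in> E"
        then have "ennreal (dist e f) < ennreal R" using ediam_ge E(2) by (meson le_less_trans)
        then show "dist e f \<le> R" by (simp add: ennreal_less_iff)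
      qed
      then obtain n where "E \<subseteq> UU X xs R \<delta> n" using UU_key[OF dens d E(1) False] by blast
      then show ?thesis by (auto simp: \<U>_def)
    qed
  qed
  have cd: "cover_diam \<U> \<le> ennreal (2 * (R + \<delta>))"
    unfolding cover_diam_def
  proof (rule SUP_least)
    fix U assume "U \<in> \<U>"
    show "ediam U \<le> ennreal (2 * (R + \<delta>))"
    proof (rule ediam_le)
      fix v w assume "v \<in> U" "w \<in> U"
      then show "dist v w \<le> 2 * (R + \<delta>)" using \<open>U \<in> \<U>\<close> UU_diam
        by (fastforce simp: \<U>_def)
    qed
  qed
  have "Delta_c X R \<le> cover_diam \<U>"
    unfolding Delta_c_def using cov pf leb by (intro Inf_lower) blast
  also have "\<dots> \<le> ennreal (2 * (R + \<delta>))" by (rule cd)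
  also have "\<dots> = ennreal (2 * R) + ennreal \<epsilon>"
  proof -
    have "2 * (R + \<delta>) = 2 * R + \<epsilon>" by (simp add: \<delta>_def)
    then show ?thesis using R \<open>\<epsilon> > 0\<close> by (simp only: ennreal_plus)
  qed
  finally show "Delta_c X R \<le> ennreal (2 * R) + ennreal \<epsilon>" .
qed


definition sc :: "real \<Rightarrow> int \<Rightarrow> real" where
  "sc \<eta> k = (1 + \<eta>) powr (real_of_int k)"

definition FF :: "'a::metric_space set \<Rightarrow> (nat \<Rightarrow> 'a) \<Rightarrow> real \<Rightarrow> 'a \<Rightarrow> int \<Rightarrow> nat \<Rightarrow> 'a \<Rightarrow> real" where
  "FF X xs \<eta> p k n z = min (infdist z (X - UU X xs (sc \<eta> k) (\<eta> * sc \<eta> k) n))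
      (min (sc \<eta> k) (max 0 (dist z p - sc \<eta> k / 2)))"

definition enc :: "nat \<Rightarrow> int \<times> nat" where
  "enc i = (int_decode (fst (prod_decode i)), snd (prod_decode i))"

lemma enc_inj: "inj enc"
proof
  fix i j assume "enc i = enc j"
  then have "int_decode (fst (prod_decode i)) = int_decode (fst (prod_decode j))"
    "snd (prod_decode i) = snd (prod_decode j)" by (auto simp: enc_def)
  then have "prod_decode i = prod_decode j"
    by (metis bij_int_decode bij_is_inj injD prod_eq_iff)
  then show "i = j" by (metis bij_prod_decode bij_is_inj injD)
qed

lemma enc_surj: "enc (prod_encode (int_encode k, n)) = (k, n)"
  by (simp add: enc_def)

lemma sc_pos: "\<eta> > 0 \<Longrightarrow> sc \<eta> k > 0"
  by (simp add: sc_def)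

lemma FF_nonneg: "\<eta> > 0 \<Longrightarrow> 0 \<le> FF X xs \<eta> p k n z"
  using sc_pos[of \<eta> k] by (simp add: FF_def infdist_nonneg)

lemma FF_le: "\<eta> > 0 \<Longrightarrow> FF X xs \<eta> p k n z \<le> dist z p"
  using sc_pos[of \<eta> k] zero_le_dist[of z p] unfolding FF_def by linarith

lemma min3:
  fixes a b c a' b' c' d :: real
  assumes "a \<le> a' + d" "b \<le> b' + d" "c \<le> c' + d"
  shows "min a (min b c) \<le> min a' (min b' c') + d"
  using assms by (simp add: min_def)

lemma FF_lip1: "FF X xs \<eta> p k n z \<le> FF X xs \<eta> p k n w + dist z w"
proof -
  define A where "A = X - UU X xs (sc \<eta> k) (\<eta> * sc \<eta> k) n"
  have 1: "infdist z A \<le> infdist w A + dist z w" by (rule infdist_triangle)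
  have 2: "dist z p \<le> dist w p + dist z w" by (metis dist_commute dist_triangle add.commute)
  have 3: "0 \<le> dist z w" by simp
  have 4: "max 0 (dist z p - sc \<eta> k / 2) \<le> max 0 (dist w p - sc \<eta> k / 2) + dist z w"
    using 2 3 by (simp add: max_def)
  show ?thesis unfolding FF_def A_def[symmetric]
    by (rule min3) (use 1 4 3 in auto)
qed

lemma FF_lip: "\<bar>FF X xs \<eta> p k n z - FF X xs \<eta> p k n w\<bar> \<le> dist z w"
  using FF_lip1[of X xs \<eta> p k n z w] FF_lip1[of X xs \<eta> p k n w z] by (simp add: dist_commute abs_le_iff)


lemma FF_sep:
  fixes xs :: "nat \<Rightarrow> 'a::metric_space"
  assumes dens: "\<forall>z\<in>X. \<forall>e>0. \<exists>n. dist z (xs n) < e" and eta: "\<eta> > 0"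
    and xy: "x \<in> X" "y \<in> X" "x \<noteq> y" and far: "dist y p \<ge> dist x y / 2"
  shows "\<exists>k n. FF X xs \<eta> p k n y \<ge> dist x y / (4 * (1 + \<eta>)^2) \<and> FF X xs \<eta> p k n x = 0"
proof -
  define b where "b = 1 + \<eta>"
  define t where "t = dist x y"
  have b1: "b > 1" using eta b_def by simp
  have t0: "t > 0" using xy t_def by simp
  define k where "k = \<lceil>log b (t / (2 * b^2))\<rceil>"
  define s where "s = sc \<eta> k"
  have sb: "s = b powr real_of_int k" by (simp add: s_def sc_def b_def)
  have s0: "s > 0" using sc_pos[OF eta] s_def by simp
  have pos: "t / (2 * b^2) > 0" using t0 b1 by simp
  have "log b (t / (2 * b^2)) \<le> real_of_int k" unfolding k_def by simp
  then have slo: "t / (2 * b^2) \<le> s" using log_le_iff[OF b1 pos] sb by simp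
  have "real_of_int k < log b (t / (2 * b^2)) + 1" unfolding k_def by linarith
  then have "b powr real_of_int k < b powr (log b (t / (2 * b^2)) + 1)"
    using powr_less_cancel_iff[OF b1] by blast
  also have "\<dots> = t / (2 * b^2) * b" using b1 pos by (simp add: powr_add)
  also have "\<dots> = t / (2 * b)" using b1 by (simp add: power2_eq_square)
  finally have shi: "2 * b * s < t" using b1 sb by (simp add: field_simps)
  define E where "E = {w\<in>X. dist y w < s / 2}"
  have "y \<in> E" using xy s0 by (simp add: E_def)
  have pw: "\<forall>e\<in>E. \<forall>f\<in>E. dist e f \<le> s"
  proof (intro ballI)
    fix e f assume "e \<in> E" "f \<in> E"
    then have "dist y e < s/2" "dist y f < s/2" by (auto simp: E_def)
    moreover have "dist e f \<le> dist y e + dist y f" by (rule dist_triangle3)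
    ultimately show "dist e f \<le> s" by linarith
  qed
  have d: "\<eta> * s > 0" using eta s0 by simp
  obtain n where n: "E \<subseteq> UU X xs s (\<eta> * s) n"
  proof -
    have "E \<subseteq> X" "E \<noteq> {}" using \<open>y \<in> E\<close> by (auto simp: E_def)
    then show ?thesis using UU_key[OF dens d _ _ pw] that by blast
  qed
  define U where "U = UU X xs s (\<eta> * s) n"
  have yU: "y \<in> U" using n \<open>y \<in> E\<close> U_def by blast
  have xU: "x \<notin> U"
  proof
    assume "x \<in> U"
    then have "dist x y < 2 * (s + \<eta> * s)" using UU_diam yU U_def by metis
    then show False using shi b_def t_def by (simp add: algebra_simps)
  qed
  have "x \<in> X - U" using xU xy by simp
  then have Fx: "FF X xs \<eta> p k n x = 0"
    using FF_nonneg[OF eta, of X xs p k n x] by (simp add: FF_def U_def s_def)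
  have inf: "infdist y (X - U) \<ge> s / 2"
  proof -
    have ne: "X - U \<noteq> {}" using \<open>x \<in> X - U\<close> by blast
    have "s / 2 \<le> Inf (dist y ` (X - U))"
    proof (rule cINF_greatest[OF ne])
      fix w assume "w \<in> X - U"
      then have "w \<notin> E" using n U_def by blast
      then show "s / 2 \<le> dist y w" using \<open>w \<in> X - U\<close> by (auto simp: E_def)
    qed
    then show ?thesis using ne by (simp add: infdist_def)
  qed
  have "s \<le> b * s" using b1 s0 by simp
  then have "dist y p - s / 2 \<ge> s / 2" using far shi t_def by linarith
  then have Fy: "FF X xs \<eta> p k n y \<ge> s / 2"
    using inf s0 by (simp add: FF_def U_def s_def)
  have "t / (4 * b^2) \<le> s / 2" using slo by simp
  then have "FF X xs \<eta> p k n y \<ge> t / (4 * (1 + \<eta>)^2)" using Fy b_def by simp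
  then show ?thesis using Fx t_def by blast
qed


lemma finite_S:
  fixes xs :: "nat \<Rightarrow> 'a::metric_space"
  assumes dens: "\<forall>z\<in>X. \<forall>e>0. \<exists>n. dist z (xs n) < e" and eta: "\<eta> > 0"
    and z: "z \<in> X" and r: "r > 0"
  shows "finite {i. r \<le> FF X xs \<eta> p (fst (enc i)) (snd (enc i)) z}"
proof -
  define b where "b = 1 + \<eta>"
  have b1: "b > 1" using eta b_def by simp
  define K where "K = {\<lfloor>log b r\<rfloor>..\<lceil>log b (2 * dist z p)\<rceil>}"
  define S where "S = Sigma K (\<lambda>k. {n. z \<in> UU X xs (sc \<eta> k) (\<eta> * sc \<eta> k) n})"
  have finS: "finite S" unfolding S_def K_def
    using UU_pf[OF dens _ z] eta sc_pos[OF eta] by (intro finite_SigmaI) auto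
  have sub: "{i. r \<le> FF X xs \<eta> p (fst (enc i)) (snd (enc i)) z} \<subseteq> enc -` S"
  proof
    fix i assume "i \<in> {i. r \<le> FF X xs \<eta> p (fst (enc i)) (snd (enc i)) z}"
    then have F: "r \<le> FF X xs \<eta> p (fst (enc i)) (snd (enc i)) z" by simp
    obtain k n where kn: "enc i = (k, n)" by (cases "enc i")
    define U where "U = UU X xs (sc \<eta> k) (\<eta> * sc \<eta> k) n"
    have F1: "r \<le> infdist z (X - U)" and F2: "r \<le> sc \<eta> k"
      and F3: "r \<le> dist z p - sc \<eta> k / 2"
      using F kn r by (auto simp: FF_def U_def max_def split: if_splits)
    have zU: "z \<in> U"
    proof (rule ccontr)
      assume "z \<notin> U" then have "infdist z (X - U) = 0" using z by simp
      then show False using F1 r by simp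
    qed
    have sk: "sc \<eta> k = b powr real_of_int k" by (simp add: sc_def b_def)
    have sp: "sc \<eta> k > 0" using sc_pos[OF eta] by simp
    have dp: "2 * dist z p > 0" using F3 sp r by linarith
    have "log b r \<le> real_of_int k"
      using F2 sk le_log_iff b1 r by (metis less_eq_real_def log_le_iff)
    then have k1: "\<lfloor>log b r\<rfloor> \<le> k" by linarith
    have "sc \<eta> k \<le> 2 * dist z p" using F3 r by simp
    then have "real_of_int k \<le> log b (2 * dist z p)"
      using sk le_log_iff[OF b1 dp] by simp
    then have k2: "k \<le> \<lceil>log b (2 * dist z p)\<rceil>" by linarith
    show "i \<in> enc -` S" using kn zU k1 k2 by (simp add: S_def K_def U_def)
  qed
  show ?thesis using finite_subset[OF sub finite_vimageI[OF finS enc_inj]] .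
qed


lemma part2:
  fixes xs :: "nat \<Rightarrow> 'a::metric_space"
  assumes dens: "\<forall>z\<in>X. \<forall>e>0. \<exists>n. dist z (xs n) < e" and \<epsilon>: "\<epsilon> > 0"
  shows "\<exists>f. lip_embeds_c0plus X (4 + \<epsilon>) f"
proof -
  define \<eta> where "\<eta> = min 1 \<epsilon> / 12"
  have eta: "\<eta> > 0" using \<epsilon> by (simp add: \<eta>_def)
  define p :: 'a where "p = undefined"
  define C where "C = 4 * (1 + \<eta>)^2"
  have C0: "C > 0" using eta by (simp add: C_def)
  have Ceps: "C \<le> 4 + \<epsilon>"
  proof -
    have "\<eta> \<le> 1/12" "12 * \<eta> \<le> \<epsilon>" by (auto simp: \<eta>_def)
    moreover have "\<eta> * \<eta> \<le> \<eta> * 1" using eta \<open>\<eta> \<le> 1/12\<close> by (intro mult_left_mono) auto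
    ultimately show ?thesis by (simp add: C_def power2_eq_square algebra_simps)
  qed
  define f where "f = (\<lambda>z i. FF X xs \<eta> p (fst (enc i)) (snd (enc i)) z)"
  have fnn: "\<And>z i. 0 \<le> f z i" using FF_nonneg[OF eta] by (simp add: f_def)
  have bdd: "\<And>x y. bdd_above (range (\<lambda>i. \<bar>f x i - f y i\<bar>))"
  proof -
    fix x y
    have "\<And>i. \<bar>f x i - f y i\<bar> \<le> dist x p + dist y p"
      using FF_le[OF eta] fnn unfolding f_def by (simp add: abs_le_iff) (smt (verit) FF_le FF_nonneg eta)
    then show "bdd_above (range (\<lambda>i. \<bar>f x i - f y i\<bar>))" by (intro bdd_aboveI) auto
  qed
  have up: "\<And>x y. c0_dist (f x) (f y) \<le> dist x y"
    unfolding c0_dist_def by (rule cSUP_least) (auto simp: f_def FF_lip)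
  have low: "\<And>x y. x \<in> X \<Longrightarrow> y \<in> X \<Longrightarrow> x \<noteq> y \<Longrightarrow> dist x y / C \<le> c0_dist (f x) (f y)"
  proof -
    have main: "dist x y / C \<le> c0_dist (f x) (f y)"
      if xy: "x \<in> X" "y \<in> X" "x \<noteq> y" and far: "dist y p \<ge> dist x y / 2" for x y
    proof -
      obtain k n where kn: "FF X xs \<eta> p k n y \<ge> dist x y / C" "FF X xs \<eta> p k n x = 0"
        using FF_sep[OF dens eta xy far] C_def by blast
      define i where "i = prod_encode (int_encode k, n)"
      have "\<bar>f x i - f y i\<bar> \<ge> dist x y / C"
        using kn by (simp add: f_def i_def enc_surj)
      also have "\<bar>f x i - f y i\<bar> \<le> c0_dist (f x) (f y)"
        unfolding c0_dist_def by (rule cSUP_upper[OF _ bdd]) simp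
      finally show ?thesis .
    qed
    fix x y assume xy: "x \<in> X" "y \<in> X" "x \<noteq> y"
    have "dist x y \<le> dist x p + dist y p" by (rule dist_triangle2)
    moreover have "dist x y = dist y x" by (rule dist_commute)
    ultimately consider "dist y p \<ge> dist x y / 2" | "dist x p \<ge> dist y x / 2"
      by linarith
    then show "dist x y / C \<le> c0_dist (f x) (f y)"
    proof cases
      case 1 then show ?thesis using main xy by blast
    next
      case 2
      then have "dist y x / C \<le> c0_dist (f y) (f x)" using main xy by blast
      moreover have "c0_dist (f y) (f x) = c0_dist (f x) (f y)"
        unfolding c0_dist_def by (simp add: abs_minus_commute)
      ultimately show ?thesis by (simp add: dist_commute)
    qed
  qed
  have c0pos: "\<And>x y. x \<in> X \<Longrightarrow> y \<in> X \<Longrightarrow> x \<noteq> y \<Longrightarrow> c0_dist (f x) (f y) > 0"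
  proof -
    fix x y assume xy: "x \<in> X" "y \<in> X" "x \<noteq> y"
    have "dist x y / C > 0" using xy C0 by simp
    then show "c0_dist (f x) (f y) > 0" using low[OF xy] by linarith
  qed
  have inj: "inj_on f X"
  proof (rule inj_onI, rule ccontr)
    fix x y assume "x \<in> X" "y \<in> X" "f x = f y" "x \<noteq> y"
    then have "c0_dist (f x) (f y) > 0" using c0pos by blast
    moreover have "c0_dist (f x) (f y) = 0" using \<open>f x = f y\<close> by (simp add: c0_dist_def)
    ultimately show False by simp
  qed
  have c0: "f ` X \<subseteq> c0plus"
  proof
    fix u assume "u \<in> f ` X"
    then obtain z where z: "z \<in> X" "u = f z" by blast
    have "f z \<longlonglongrightarrow> 0"
    proof (rule LIMSEQ_I)
      fix r :: real assume r: "r > 0"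
      have "finite {i. r \<le> f z i}" using finite_S[OF dens eta z(1) r] by (simp add: f_def)
      then obtain N where N: "{i. r \<le> f z i} \<subseteq> {..<N}" using finite_nat_bounded by blast
      show "\<exists>N. \<forall>n\<ge>N. norm (f z n - 0) < r"
      proof (intro exI allI impI)
        fix n assume "N \<le> n"
        then have "n \<notin> {i. r \<le> f z i}" using N by auto
        then show "norm (f z n - 0) < r" using fnn[of z n] by simp
      qed
    qed
    then show "u \<in> c0plus" using z fnn by (simp add: c0plus_def)
  qed
  have L1: "lip_const X dist c0_dist f \<le> 1"
    unfolding lip_const_def
  proof (rule SUP_least)
    fix q assume "q \<in> {(x, y). x \<in> X \<and> y \<in> X \<and> x \<noteq> y}"
    then obtain x y where q: "q = (x, y)" "x \<in> X" "y \<in> X" "x \<noteq> y" by blast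
    have "c0_dist (f x) (f y) / dist x y \<le> 1" using up[of x y] q by simp
    then show "ennreal (c0_dist (f (fst q)) (f (snd q)) / dist (fst q) (snd q)) \<le> 1"
      using q by (simp add: ennreal_leI)
  qed
  have L2: "lip_const (f ` X) c0_dist dist (inv_into X f) \<le> ennreal C"
    unfolding lip_const_def
  proof (rule SUP_least)
    fix q assume "q \<in> {(u, v). u \<in> f ` X \<and> v \<in> f ` X \<and> u \<noteq> v}"
    then obtain x y where q: "q = (f x, f y)" "x \<in> X" "y \<in> X" "x \<noteq> y" by blast
    have ix: "inv_into X f (f x) = x" "inv_into X f (f y) = y" using inj q by auto
    have pos: "c0_dist (f x) (f y) > 0" using c0pos q by blast
    have "dist x y / C \<le> c0_dist (f x) (f y)" using low q by blast
    then have "dist x y / c0_dist (f x) (f y) \<le> C" using pos C0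
      by (simp add: divide_le_eq mult.commute)
    then show "ennreal (dist (inv_into X f (fst q)) (inv_into X f (snd q)) / c0_dist (fst q) (snd q)) \<le> ennreal C"
      using q ix by (simp add: ennreal_leI)
  qed
  have "lip_const X dist c0_dist f * lip_const (f ` X) c0_dist dist (inv_into X f) \<le> ennreal C"
    using L1 L2 by (metis mult_mono mult_1 zero_le)
  also have "\<dots> \<le> ennreal (4 + \<epsilon>)" using Ceps by (simp add: ennreal_leI)
  finally show ?thesis using c0 inj unfolding lip_embeds_c0plus_def by blast
qed

theorem proposition4p2:
  fixes X :: "'a::metric_space set"
  assumes "separable_space (subtopology euclidean X)"
  shows "(\<forall>R\<ge>0. Delta_c X R \<le> ennreal (2 * R)) \<and>
         (\<forall>\<epsilon>>0. \<exists>f. lip_embeds_c0plus X (4 + \<epsilon>) f)"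
proof -
  obtain xs :: "nat \<Rightarrow> 'a" where dens: "\<forall>z\<in>X. \<forall>e>0. \<exists>n. dist z (xs n) < e"
    using dense_seq[OF assms] by blast
  show ?thesis using part1[OF dens] part2[OF dens] by blast
qed

end
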